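(* Let $A$ be a non-zero evolution algebra. Then (i) $A$ is semisimple if and only if $A$ is a non-zero trivial evolution algebra; (ii) $A/\mathrm{Rad}(A)$ is either $\{0\}$ or a non-zero trivial evolution algebra.
   Context: An evolution algebra is an algebra $A$ over $\mathbb{K}\in\{\mathbb{R},\mathbb{C}\}$ with a basis $\{e_i:i\in\Lambda\}$ (natural basis) with $e_ie_j=0$ for $i\neq j$. A non-zero trivial evolution algebra is one having a natural basis with $e_i^2=\omega_{ii}e_i$, $\omega_{ii}\neq0$, for all $i$. An ideal $M$ is modular if some $u\in A$ satisfies $a-au\in M$ for all $a\in A$; $\mathrm{Rad}(A)$ is the intersection of all maximal modular ideals of $A$ (equal to $A$ if there are none), and $A$ is semisimple if $\mathrm{Rad}(A)=\{0\}$. $A/\mathrm{Rad}(A)$ carries the quotient product. *)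

theory Defs
  imports "HOL-Analysis.Analysis"
begin

text \<open>Everything is stated generically in sc and later instantiated
with scaleR (K = real) and scaleC (K = complex).\<close>

definition algebra_product :: "('k::field \<Rightarrow> 'a::ab_group_add \<Rightarrow> 'a) \<Rightarrow> ('a \<Rightarrow> 'a \<Rightarrow> 'a) \<Rightarrow> bool" where
  "algebra_product sc prd \<longleftrightarrow>
     vector_space sc \<and>
     (\<forall>x. Vector_Spaces.linear sc sc (prd x)) \<and>
     (\<forall>y. Vector_Spaces.linear sc sc (\<lambda>x. prd x y))"

definition natural_basis :: "('k::field \<Rightarrow> 'a::ab_group_add \<Rightarrow> 'a) \<Rightarrow> ('a \<Rightarrow> 'a \<Rightarrow> 'a) \<Rightarrow> 'a set \<Rightarrow> bool" where
  "natural_basis sc prd B \<longleftrightarrow>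
     \<not> module.dependent sc B \<and> module.span sc B = UNIV \<and>
     (\<forall>e\<in>B. \<forall>e'\<in>B. e \<noteq> e' \<longrightarrow> prd e e' = 0)"

definition evolution_algebra :: "('k::field \<Rightarrow> 'a::ab_group_add \<Rightarrow> 'a) \<Rightarrow> ('a \<Rightarrow> 'a \<Rightarrow> 'a) \<Rightarrow> bool" where
  "evolution_algebra sc prd \<longleftrightarrow>
     algebra_product sc prd \<and> (\<exists>B. natural_basis sc prd B)"

definition nonzero_trivial_evolution_algebra :: "('k::field \<Rightarrow> 'a::ab_group_add \<Rightarrow> 'a) \<Rightarrow> ('a \<Rightarrow> 'a \<Rightarrow> 'a) \<Rightarrow> bool" where
  "nonzero_trivial_evolution_algebra sc prd \<longleftrightarrow>
     algebra_product sc prd \<and>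
     (\<exists>B. natural_basis sc prd B \<and> (\<forall>e\<in>B. \<exists>w. w \<noteq> 0 \<and> prd e e = sc w e))"

definition alg_ideal :: "('k::field \<Rightarrow> 'a::ab_group_add \<Rightarrow> 'a) \<Rightarrow> ('a \<Rightarrow> 'a \<Rightarrow> 'a) \<Rightarrow> 'a set \<Rightarrow> bool" where
  "alg_ideal sc prd I \<longleftrightarrow>
     module.subspace sc I \<and> (\<forall>a x. x \<in> I \<longrightarrow> prd a x \<in> I \<and> prd x a \<in> I)"

definition modular_ideal :: "('k::field \<Rightarrow> 'a::ab_group_add \<Rightarrow> 'a) \<Rightarrow> ('a \<Rightarrow> 'a \<Rightarrow> 'a) \<Rightarrow> 'a set \<Rightarrow> bool" where
  "modular_ideal sc prd M \<longleftrightarrow>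
     alg_ideal sc prd M \<and> (\<exists>u. \<forall>a. a - prd a u \<in> M)"

definition maximal_modular_ideal :: "('k::field \<Rightarrow> 'a::ab_group_add \<Rightarrow> 'a) \<Rightarrow> ('a \<Rightarrow> 'a \<Rightarrow> 'a) \<Rightarrow> 'a set \<Rightarrow> bool" where
  "maximal_modular_ideal sc prd M \<longleftrightarrow>
     modular_ideal sc prd M \<and> M \<noteq> UNIV \<and>
     (\<forall>J. alg_ideal sc prd J \<and> M \<subseteq> J \<longrightarrow> J = M \<or> J = UNIV)"

text \<open>Intersection of all maximal modular ideals (UNIV if there are none).\<close>
definition Rad :: "('k::field \<Rightarrow> 'a::ab_group_add \<Rightarrow> 'a) \<Rightarrow> ('a \<Rightarrow> 'a \<Rightarrow> 'a) \<Rightarrow> 'a set" where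
  "Rad sc prd = \<Inter> {M. maximal_modular_ideal sc prd M}"

definition semisimple :: "('k::field \<Rightarrow> 'a::ab_group_add \<Rightarrow> 'a) \<Rightarrow> ('a \<Rightarrow> 'a \<Rightarrow> 'a) \<Rightarrow> bool" where
  "semisimple sc prd \<longleftrightarrow> Rad sc prd = {0}"

text \<open>The quotient algebra A/R (R an ideal) described through representatives:
a family B of elements of A whose cosets b + R form a basis of A/R is
"linearly independent modulo R" and "spans modulo R"; the quotient product is
(x + R)(y + R) = x y + R.\<close>
definition independent_mod :: "('k::field \<Rightarrow> 'a::ab_group_add \<Rightarrow> 'a) \<Rightarrow> 'a set \<Rightarrow> 'a set \<Rightarrow> bool" where
  "independent_mod sc R B \<longleftrightarrow>
     (\<forall>S c. finite S \<and> S \<subseteq> B \<and> (\<Sum>s\<in>S. sc (c s) s) \<in> R \<longrightarrow> (\<forall>s\<in>S. c s = 0))"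

definition spans_mod :: "('k::field \<Rightarrow> 'a::ab_group_add \<Rightarrow> 'a) \<Rightarrow> 'a set \<Rightarrow> 'a set \<Rightarrow> bool" where
  "spans_mod sc R B \<longleftrightarrow>
     (\<forall>x. \<exists>S c r. finite S \<and> S \<subseteq> B \<and> r \<in> R \<and> x = (\<Sum>s\<in>S. sc (c s) s) + r)"

text \<open>A/R is a non-zero trivial evolution algebra: there is a natural basis
{b + R : b in B} of A/R (distinct cosets for distinct b) with
(b + R)^2 = w (b + R), w nonzero, for every b in B.\<close>
definition quotient_nonzero_trivial_evolution_algebra ::
  "('k::field \<Rightarrow> 'a::ab_group_add \<Rightarrow> 'a) \<Rightarrow> ('a \<Rightarrow> 'a \<Rightarrow> 'a) \<Rightarrow> 'a set \<Rightarrow> bool" where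
  "quotient_nonzero_trivial_evolution_algebra sc prd R \<longleftrightarrow>
     (\<exists>B. independent_mod sc R B \<and> spans_mod sc R B \<and>
          (\<forall>b\<in>B. \<forall>b'\<in>B. b \<noteq> b' \<longrightarrow> b - b' \<notin> R \<and> prd b b' \<in> R) \<and>
          (\<forall>b\<in>B. \<exists>w. w \<noteq> 0 \<and> prd b b - sc w b \<in> R))"

end

theory Submission
  imports Defs
begin

locale evo = vector_space scale
  for scale :: "'k::field \<Rightarrow> 'a::ab_group_add \<Rightarrow> 'a" +
  fixes prd :: "'a \<Rightarrow> 'a \<Rightarrow> 'a" and B :: "'a set"
  assumes lin1: "\<And>x. Vector_Spaces.linear scale scale (prd x)"
    and lin2: "\<And>y. Vector_Spaces.linear scale scale (\<lambda>x. prd x y)"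
    and indep: "independent B" and spanB: "span B = UNIV"
    and orth: "\<And>e e'. e \<in> B \<Longrightarrow> e' \<in> B \<Longrightarrow> e \<noteq> e' \<Longrightarrow> prd e e' = 0"
begin

abbreviation r where "r \<equiv> representation B"

lemma H1: "module_hom scale scale (prd x)"
  using lin1 module_hom_iff_linear by blast
lemma H2: "module_hom scale scale (\<lambda>x. prd x y)"
  using lin2 module_hom_iff_linear by blast

lemma inspan[simp]: "x \<in> span B" using spanB by simp

lemma r_add: "r (x + y) b = r x b + r y b"
  using representation_add[OF indep] by simp
lemma r_diff: "r (x - y) b = r x b - r y b"
  using representation_diff[OF indep] by simp
lemma r_scale: "r (scale c x) b = c * r x b"
  using representation_scale[OF indep] by simp
lemma r_zero: "r 0 b = 0"
  by (simp add: representation_zero)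
lemma r_sum: "r (sum f S) b = (\<Sum>i\<in>S. r (f i) b)"
  by (subst representation_sum[OF indep]) auto
lemma r_basis: "e \<in> B \<Longrightarrow> r e b = (if b = e then 1 else 0)"
  using representation_basis[OF indep] by simp
lemma r_out: "r x b \<noteq> 0 \<Longrightarrow> b \<in> B"
  using representation_ne_zero by blast
lemma r_fin: "finite {b. r x b \<noteq> 0}"
  using finite_representation by blast
lemma expand: "(\<Sum>b | r x b \<noteq> 0. scale (r x b) b) = x"
  using sum_nonzero_representation_eq[OF indep] by simp

lemma expand_on: assumes "finite S" "{b. r x b \<noteq> 0} \<subseteq> S"
  shows "(\<Sum>b\<in>S. scale (r x b) b) = x"
proof -
  have "(\<Sum>b\<in>S. scale (r x b) b) = (\<Sum>b | r x b \<noteq> 0. scale (r x b) b)"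
    by (rule sum.mono_neutral_right) (use assms in auto)
  then show ?thesis using expand by simp
qed

lemma r_ext: assumes "\<And>b. r x b = r y b" shows "x = y"
proof -
  have "r x = r y" using assms by (rule ext)
  have "x = (\<Sum>b | r x b \<noteq> 0. scale (r x b) b)" by (rule expand[symmetric])
  also have "\<dots> = (\<Sum>b | r y b \<noteq> 0. scale (r y b) b)" using \<open>r x = r y\<close> by simp
  also have "\<dots> = y" by (rule expand)
  finally show ?thesis .
qed

lemma prd_right: assumes e: "e \<in> B" shows "prd a e = scale (r a e) (prd e e)"
proof -
  let ?S = "insert e {b. r a b \<noteq> 0}"
  have fin: "finite ?S" using r_fin by simp
  have "a = (\<Sum>b\<in>?S. scale (r a b) b)"
    by (rule expand_on[symmetric]) (use fin in auto)
  then have "prd a e = prd (\<Sum>b\<in>?S. scale (r a b) b) e" by simp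
  also have "\<dots> = (\<Sum>b\<in>?S. scale (r a b) (prd b e))"
    by (simp add: module_hom.sum[OF H2] module_hom.scale[OF H2])
  also have "\<dots> = (\<Sum>b\<in>?S. if b = e then scale (r a e) (prd e e) else 0)"
    by (rule sum.cong) (auto simp: orth e dest: r_out)
  also have "\<dots> = scale (r a e) (prd e e)" using fin by (simp add: sum.delta)
  finally show ?thesis .
qed

lemma prd_left: assumes e: "e \<in> B" shows "prd e a = scale (r a e) (prd e e)"
proof -
  let ?S = "insert e {b. r a b \<noteq> 0}"
  have fin: "finite ?S" using r_fin by simp
  have "a = (\<Sum>b\<in>?S. scale (r a b) b)"
    by (rule expand_on[symmetric]) (use fin in auto)
  then have "prd e a = prd e (\<Sum>b\<in>?S. scale (r a b) b)" by simp
  also have "\<dots> = (\<Sum>b\<in>?S. scale (r a b) (prd e b))"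
    by (simp add: module_hom.sum[OF H1] module_hom.scale[OF H1])
  also have "\<dots> = (\<Sum>b\<in>?S. if b = e then scale (r a e) (prd e e) else 0)"
    by (rule sum.cong) (auto simp: orth e dest: r_out)
  also have "\<dots> = scale (r a e) (prd e e)" using fin by (simp add: sum.delta)
  finally show ?thesis .
qed

lemma prd_expand1: "prd a x = (\<Sum>b | r x b \<noteq> 0. scale (r x b * r a b) (prd b b))"
proof -
  have "prd a x = prd a (\<Sum>b | r x b \<noteq> 0. scale (r x b) b)" by (simp add: expand)
  also have "\<dots> = (\<Sum>b | r x b \<noteq> 0. scale (r x b) (prd a b))"
    by (simp add: module_hom.sum[OF H1] module_hom.scale[OF H1])
  also have "\<dots> = (\<Sum>b | r x b \<noteq> 0. scale (r x b * r a b) (prd b b))"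
  proof (rule sum.cong[OF refl])
    fix b assume "b \<in> {b. r x b \<noteq> 0}"
    then have "b \<in> B" using r_out by auto
    then have e: "prd a b = scale (r a b) (prd b b)" by (rule prd_right)
    show "scale (r x b) (prd a b) = scale (r x b * r a b) (prd b b)" unfolding e by simp
  qed
  finally show ?thesis .
qed

lemma prd_expand2: "prd x a = (\<Sum>b | r x b \<noteq> 0. scale (r x b * r a b) (prd b b))"
proof -
  have "prd x a = prd (\<Sum>b | r x b \<noteq> 0. scale (r x b) b) a" by (simp add: expand)
  also have "\<dots> = (\<Sum>b | r x b \<noteq> 0. scale (r x b) (prd b a))"
    by (simp add: module_hom.sum[OF H2] module_hom.scale[OF H2])
  also have "\<dots> = (\<Sum>b | r x b \<noteq> 0. scale (r x b * r a b) (prd b b))"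
  proof (rule sum.cong[OF refl])
    fix b assume "b \<in> {b. r x b \<noteq> 0}"
    then have "b \<in> B" using r_out by auto
    then have e: "prd b a = scale (r a b) (prd b b)" by (rule prd_left)
    show "scale (r x b) (prd b a) = scale (r x b * r a b) (prd b b)" unfolding e by simp
  qed
  finally show ?thesis .
qed

definition G where "G = {j\<in>B. r (prd j j) j \<noteq> 0 \<and> (\<forall>k\<in>B. k \<noteq> j \<longrightarrow> r (prd k k) j = 0)}"
definition MI where "MI j = {x. r x j = 0}"

lemma subspace_MI: "subspace (MI j)"
  unfolding subspace_def MI_def by (simp add: r_zero r_add r_scale)

lemma r_prd1_MI: assumes j: "j \<in> G" and x: "r x j = 0" shows "r (prd a x) j = 0"
proof -
  have "r (prd a x) j = (\<Sum>b | r x b \<noteq> 0. r x b * r a b * r (prd b b) j)"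
    by (simp add: prd_expand1[of a x] r_sum r_scale)
  also have "\<dots> = 0"
  proof (rule sum.neutral, rule ballI)
    fix b assume b: "b \<in> {b. r x b \<noteq> 0}"
    then have "b \<in> B" "b \<noteq> j" using r_out x by auto
    then have "r (prd b b) j = 0" using j unfolding G_def by auto
    then show "r x b * r a b * r (prd b b) j = 0" by simp
  qed
  finally show ?thesis .
qed

lemma r_prd2_MI: assumes j: "j \<in> G" and x: "r x j = 0" shows "r (prd x a) j = 0"
proof -
  have "r (prd x a) j = (\<Sum>b | r x b \<noteq> 0. r x b * r a b * r (prd b b) j)"
    by (simp add: prd_expand2[of x a] r_sum r_scale)
  also have "\<dots> = 0"
  proof (rule sum.neutral, rule ballI)
    fix b assume b: "b \<in> {b. r x b \<noteq> 0}"
    then have "b \<in> B" "b \<noteq> j" using r_out x by auto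
    then have "r (prd b b) j = 0" using j unfolding G_def by auto
    then show "r x b * r a b * r (prd b b) j = 0" by simp
  qed
  finally show ?thesis .
qed

lemma ideal_MI: "j \<in> G \<Longrightarrow> alg_ideal scale prd (MI j)"
  unfolding alg_ideal_def using subspace_MI r_prd1_MI r_prd2_MI by (auto simp: MI_def)

lemma maxI: assumes j: "j \<in> G" shows "maximal_modular_ideal scale prd (MI j)"
proof -
  have jB: "j \<in> B" and w: "r (prd j j) j \<noteq> 0" using j by (auto simp: G_def)
  define u where "u = scale (inverse (r (prd j j) j)) j"
  have modu: "a - prd a u \<in> MI j" for a
  proof -
    have "prd a u = scale (inverse (r (prd j j) j)) (prd a j)"
      unfolding u_def by (simp add: module_hom.scale[OF H1])
    also have "\<dots> = scale (inverse (r (prd j j) j)) (scale (r a j) (prd j j))"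
      by (simp add: prd_right[OF jB, of a])
    finally have "r (prd a u) j = r a j" using w by (simp add: r_scale)
    then show ?thesis by (simp add: MI_def r_diff)
  qed
  have notU: "MI j \<noteq> UNIV"
  proof
    assume "MI j = UNIV" then have "j \<in> MI j" by simp
    then show False using r_basis[OF jB, of j] by (simp add: MI_def)
  qed
  have maxi: "J = MI j \<or> J = UNIV" if J: "alg_ideal scale prd J" "MI j \<subseteq> J" for J
  proof (cases "J = MI j")
    case False
    then obtain y where y: "y \<in> J" "r y j \<noteq> 0" using J(2) by (auto simp: MI_def)
    have sJ: "subspace J" using J(1) by (simp add: alg_ideal_def)
    have "x \<in> J" for x
    proof -
      let ?c = "r x j / r y j"
      have "x - scale ?c y \<in> MI j" using y by (simp add: MI_def r_diff r_scale)
      then have "x - scale ?c y \<in> J" using J(2) by auto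
      moreover have "scale ?c y \<in> J" using sJ y by (simp add: subspace_scale)
      ultimately have "(x - scale ?c y) + scale ?c y \<in> J" using sJ subspace_add by blast
      then show ?thesis by simp
    qed
    then show ?thesis by auto
  qed simp
  show ?thesis unfolding maximal_modular_ideal_def modular_ideal_def
    using ideal_MI[OF j] modu notU maxi by blast
qed

lemma unscale: assumes "subspace M" "scale a v \<in> M" "a \<noteq> 0" shows "v \<in> M"
proof -
  have "scale (inverse a) (scale a v) \<in> M" using assms subspace_scale by blast
  then show ?thesis using assms(3) by simp
qed

lemma maxD: assumes M: "maximal_modular_ideal scale prd M" shows "\<exists>j\<in>G. M = MI j"
proof -
  from M obtain u where sM: "subspace M" and clo: "\<And>a x. x \<in> M \<Longrightarrow> prd a x \<in> M \<and> prd x a \<in> M"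
    and mu: "\<And>a. a - prd a u \<in> M" and nU: "M \<noteq> UNIV"
    and mx: "\<And>J. alg_ideal scale prd J \<Longrightarrow> M \<subseteq> J \<Longrightarrow> J = M \<or> J = UNIV"
    unfolding maximal_modular_ideal_def modular_ideal_def alg_ideal_def by blast
  have "\<exists>j\<in>B. j \<notin> M"
  proof (rule ccontr)
    assume "\<not> (\<exists>j\<in>B. j \<notin> M)" then have "B \<subseteq> M" by auto
    then have "span B \<subseteq> M" using span_minimal sM by blast
    then show False using nU spanB by auto
  qed
  then obtain j where jB: "j \<in> B" and jM: "j \<notin> M" by blast
  define c where "c = r u j"
  have pju: "prd j u = scale c (prd j j)" using prd_left[OF jB, of u] c_def by simp
  have jc: "j - scale c (prd j j) \<in> M" using mu[of j] pju by simp
  have c0: "c \<noteq> 0"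
  proof
    assume "c = 0" then show False using jc jM by simp
  qed
  define m' where "m' = prd j j - scale (inverse c) j"
  have "m' = scale (- inverse c) (j - scale c (prd j j))"
    using c0 by (simp add: m'_def scale_right_diff_distrib)
  then have m'M: "m' \<in> M" using jc sM subspace_scale by metis
  have pjj: "prd j j = scale (inverse c) j + m'" by (simp add: m'_def)
  define J where "J = {x. \<exists>t m. m \<in> M \<and> x = scale t j + m}"
  have MJ: "M \<subseteq> J" unfolding J_def by (auto intro: exI[of _ 0])
  have jJ: "j \<in> J" unfolding J_def using subspace_0[OF sM] by (auto intro!: exI[of _ 1])
  have sJ: "subspace J"
    unfolding subspace_def
  proof (intro conjI allI ballI)
    show "0 \<in> J" using MJ subspace_0[OF sM] by auto
    fix x y assume "x \<in> J" "y \<in> J"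
    then obtain t1 m1 t2 m2 where "m1 \<in> M" "x = scale t1 j + m1" "m2 \<in> M" "y = scale t2 j + m2"
      unfolding J_def by blast
    then show "x + y \<in> J" unfolding J_def using subspace_add[OF sM]
      by (auto intro!: exI[of _ "t1 + t2"] exI[of _ "m1 + m2"] simp: scale_left_distrib)
  next
    fix a x assume "x \<in> J"
    then obtain t1 m1 where "m1 \<in> M" "x = scale t1 j + m1" unfolding J_def by blast
    then show "scale a x \<in> J" unfolding J_def using subspace_scale[OF sM]
      by (auto intro!: exI[of _ "a * t1"] exI[of _ "scale a m1"] simp: scale_right_distrib)
  qed
  have cloJ: "prd a x \<in> J \<and> prd x a \<in> J" if "x \<in> J" for a x
  proof -
    obtain t m where m: "m \<in> M" and x: "x = scale t j + m" using \<open>x \<in> J\<close> unfolding J_def by blast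
    have "prd a x = scale t (prd a j) + prd a m"
      unfolding x by (simp add: module_hom.add[OF H1] module_hom.scale[OF H1])
    also have "\<dots> = scale t (scale (r a j) (scale (inverse c) j + m')) + prd a m"
      using prd_right[OF jB, of a] pjj by simp
    also have "\<dots> = scale (t * r a j * inverse c) j + (scale (t * r a j) m' + prd a m)"
      by (simp add: scale_right_distrib add.assoc)
    finally have 1: "prd a x = \<dots>" .
    have "prd x a = scale t (prd j a) + prd m a"
      unfolding x by (simp add: module_hom.add[OF H2] module_hom.scale[OF H2])
    also have "\<dots> = scale t (scale (r a j) (scale (inverse c) j + m')) + prd m a"
      using prd_left[OF jB, of a] pjj by simp
    also have "\<dots> = scale (t * r a j * inverse c) j + (scale (t * r a j) m' + prd m a)"
      by (simp add: scale_right_distrib add.assoc)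
    finally have 2: "prd x a = \<dots>" .
    have "scale (t * r a j) m' + prd a m \<in> M" "scale (t * r a j) m' + prd m a \<in> M"
      using m'M m clo subspace_add[OF sM] subspace_scale[OF sM] by auto
    then show ?thesis unfolding 1 2 J_def by blast
  qed
  have "alg_ideal scale prd J" unfolding alg_ideal_def using sJ cloJ by blast
  then have JU: "J = UNIV" using mx MJ jJ jM by blast
  have kM: "k \<in> M" if k: "k \<in> B" "k \<noteq> j" for k
  proof -
    obtain t m where m: "m \<in> M" and x: "k = scale t j + m" using JU unfolding J_def by blast
    have "0 = prd k j" using orth k jB by simp
    also have "\<dots> = scale t (prd j j) + prd m j"
      unfolding x by (simp add: module_hom.add[OF H2] module_hom.scale[OF H2])
    also have "\<dots> = scale (t * inverse c) j + (scale t m' + prd m j)"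
      unfolding pjj by (simp add: scale_right_distrib add.assoc)
    finally have "scale (t * inverse c) j = - (scale t m' + prd m j)"
      by (metis eq_neg_iff_add_eq_0)
    moreover have "scale t m' + prd m j \<in> M"
      using m'M m clo subspace_add[OF sM] subspace_scale[OF sM] by auto
    then have "- (scale t m' + prd m j) \<in> M" by (rule subspace_neg[OF sM])
    ultimately have "scale (t * inverse c) j \<in> M" by simp
    then have "t = 0" using unscale[OF sM] jM c0 by fastforce
    then show ?thesis using x m by simp
  qed
  have MIsub: "MI j \<subseteq> M"
  proof
    fix x assume "x \<in> MI j"
    then have x: "r x j = 0" by (simp add: MI_def)
    have "(\<Sum>b | r x b \<noteq> 0. scale (r x b) b) \<in> M"
    proof (rule subspace_sum[OF sM])
      fix b assume "b \<in> {b. r x b \<noteq> 0}"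
      then have "b \<in> B" "b \<noteq> j" using r_out x by auto
      then show "scale (r x b) b \<in> M" using kM subspace_scale[OF sM] by blast
    qed
    then show "x \<in> M" by (simp add: expand)
  qed
  have subMI: "M \<subseteq> MI j"
  proof
    fix x assume xM: "x \<in> M"
    have "x - scale (r x j) j \<in> MI j" using r_basis[OF jB] by (simp add: MI_def r_diff r_scale)
    then have "x - scale (r x j) j \<in> M" using MIsub by auto
    then have "x - (x - scale (r x j) j) \<in> M" using xM subspace_diff[OF sM] by blast
    then have "scale (r x j) j \<in> M" by simp
    then have "r x j = 0" using unscale[OF sM] jM by blast
    then show "x \<in> MI j" by (simp add: MI_def)
  qed
  have MeqMI: "M = MI j" using MIsub subMI by blast
  have "r (prd j j) j = inverse c"
    using m'M MeqMI r_basis[OF jB] unfolding pjj by (simp add: r_add r_scale MI_def)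
  then have "r (prd j j) j \<noteq> 0" using c0 by simp
  moreover have "r (prd k k) j = 0" if "k \<in> B" "k \<noteq> j" for k
  proof -
    have "prd k k \<in> M" using kM[OF that] clo by blast
    then show ?thesis using MeqMI by (simp add: MI_def)
  qed
  ultimately have "j \<in> G" using jB unfolding G_def by blast
  then show ?thesis using MeqMI by blast
qed

lemma maxset: "{M. maximal_modular_ideal scale prd M} = MI ` G"
  using maxI maxD by auto

lemma Rad_eq: "Rad scale prd = {x. \<forall>j\<in>G. r x j = 0}"
  unfolding Rad_def maxset MI_def by auto

lemma zero_notin_B: "0 \<notin> B"
  using indep dependent_zero by blast

lemma semi_triv: assumes R: "Rad scale prd = {0}"
  shows "\<forall>e\<in>B. \<exists>w. w \<noteq> 0 \<and> prd e e = scale w e"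
proof -
  have GB: "G = B"
  proof (rule ccontr)
    assume "G \<noteq> B"
    then obtain j where j: "j \<in> B" "j \<notin> G" unfolding G_def by auto
    have "j \<in> Rad scale prd" unfolding Rad_eq
      using j r_basis[OF j(1)] by auto
    then have "j = 0" using R by simp
    then show False using j zero_notin_B by simp
  qed
  show ?thesis
  proof
    fix e assume e: "e \<in> B"
    define w where "w = r (prd e e) e"
    have w0: "w \<noteq> 0" using e GB unfolding w_def G_def by auto
    have "prd e e = scale w e"
    proof (rule r_ext)
      fix b
      show "r (prd e e) b = r (scale w e) b"
      proof (cases "b = e")
        case True then show ?thesis using r_basis[OF e] by (simp add: r_scale w_def)
      next
        case False
        show ?thesis
        proof (cases "b \<in> B")
          case True
          then have "b \<in> G" using GB by simp
          then have "r (prd e e) b = 0" using e False unfolding G_def by auto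
          then show ?thesis using r_basis[OF e] False by (simp add: r_scale)
        next
          case nb: False
          then have "r (prd e e) b = 0" "r (scale w e) b = 0" using r_out by blast+
          then show ?thesis by simp
        qed
      qed
    qed
    then show "\<exists>w. w \<noteq> 0 \<and> prd e e = scale w e" using w0 by blast
  qed
qed

lemma triv_semi: assumes T: "\<forall>e\<in>B. \<exists>w. w \<noteq> 0 \<and> prd e e = scale w e"
  shows "Rad scale prd = {0}"
proof -
  have GB: "G = B"
  proof
    show "G \<subseteq> B" unfolding G_def by auto
    show "B \<subseteq> G"
    proof
      fix j assume j: "j \<in> B"
      have "r (prd j j) j \<noteq> 0" using T j r_basis[OF j] by (auto simp: r_scale)
      moreover have "r (prd k k) j = 0" if "k \<in> B" "k \<noteq> j" for k
        using T that r_basis[OF that(1)] by (auto simp: r_scale)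
      ultimately show "j \<in> G" using j unfolding G_def by blast
    qed
  qed
  have "x = 0" if "\<forall>j\<in>B. r x j = 0" for x
  proof (rule r_ext)
    fix b show "r x b = r 0 b" using that r_out by (cases "b \<in> B") (auto simp: r_zero)
  qed
  then show ?thesis unfolding Rad_eq GB by (auto simp: r_zero)
qed

lemma quot: "Rad scale prd = UNIV \<or> quotient_nonzero_trivial_evolution_algebra scale prd (Rad scale prd)"
proof (cases "G = {}")
  case True then show ?thesis unfolding Rad_eq by simp
next
  case False
  have GB: "G \<subseteq> B" unfolding G_def by auto
  let ?R = "Rad scale prd"
  have Rmem: "y \<in> ?R \<longleftrightarrow> (\<forall>j\<in>G. r y j = 0)" for y unfolding Rad_eq by simp
  have rsum: "r (\<Sum>s\<in>S. scale (c s) s) j = (if j \<in> S then c j else 0)"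
    if "finite S" "S \<subseteq> B" for S c j
  proof -
    have "r (\<Sum>s\<in>S. scale (c s) s) j = (\<Sum>s\<in>S. c s * r s j)" by (simp add: r_sum r_scale)
    also have "\<dots> = (\<Sum>s\<in>S. if s = j then c j else 0)"
      by (rule sum.cong[OF refl]) (use that r_basis in auto)
    also have "\<dots> = (if j \<in> S then c j else 0)" using that by (simp add: sum.delta)
    finally show ?thesis .
  qed
  have im: "independent_mod scale ?R G"
    unfolding independent_mod_def
  proof (intro allI impI ballI)
    fix S c s assume H: "finite S \<and> S \<subseteq> G \<and> (\<Sum>s\<in>S. scale (c s) s) \<in> ?R" and s: "s \<in> S"
    then have "r (\<Sum>s\<in>S. scale (c s) s) s = 0" using Rmem by blast
    then show "c s = 0" using rsum[of S c s] H GB s by auto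
  qed
  have sm: "spans_mod scale ?R G"
    unfolding spans_mod_def
  proof
    fix x
    let ?S = "{b\<in>G. r x b \<noteq> 0}"
    have fin: "finite ?S" using r_fin by (rule finite_subset[rotated]) auto
    let ?rem = "x - (\<Sum>s\<in>?S. scale (r x s) s)"
    have "?rem \<in> ?R" unfolding Rmem
    proof
      fix j assume "j \<in> G"
      moreover have "?S \<subseteq> B" using GB by auto
      ultimately show "r ?rem j = 0" using rsum[OF fin, of "r x" j]
        by (cases "r x j = 0") (auto simp: r_diff)
    qed
    moreover have "x = (\<Sum>s\<in>?S. scale (r x s) s) + ?rem" by simp
    ultimately show "\<exists>S c r. finite S \<and> S \<subseteq> G \<and> r \<in> ?R \<and> x = (\<Sum>s\<in>S. scale (c s) s) + r"
      using fin by blast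
  qed
  have dist: "b - b' \<notin> ?R \<and> prd b b' \<in> ?R" if "b \<in> G" "b' \<in> G" "b \<noteq> b'" for b b'
  proof
    have "b \<in> B" "b' \<in> B" using that GB by auto
    then have "r (b - b') b = 1" using r_basis[of b b] r_basis[of b' b] that(3) by (simp add: r_diff)
    then show "b - b' \<notin> ?R" using that Rmem by force
    have "prd b b' = 0" using that GB orth by blast
    then show "prd b b' \<in> ?R" using Rmem by (simp add: r_zero)
  qed
  have sq: "\<exists>w. w \<noteq> 0 \<and> prd b b - scale w b \<in> ?R" if b: "b \<in> G" for b
  proof (intro exI conjI)
    show "r (prd b b) b \<noteq> 0" using b unfolding G_def by auto
    show "prd b b - scale (r (prd b b) b) b \<in> ?R" unfolding Rmem
    proof
      fix j assume j: "j \<in> G"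
      show "r (prd b b - scale (r (prd b b) b) b) j = 0"
      proof (cases "j = b")
        case True then show ?thesis using r_basis b GB by (auto simp: r_diff r_scale)
      next
        case False
        then have "r (prd b b) j = 0" using j b GB unfolding G_def by auto
        then show ?thesis using r_basis b GB False by (auto simp: r_diff r_scale)
      qed
    qed
  qed
  show ?thesis unfolding quotient_nonzero_trivial_evolution_algebra_def
    using im sm dist sq by blast
qed

end


lemma evo_main:
  fixes sc :: "'k::field \<Rightarrow> 'a::ab_group_add \<Rightarrow> 'a" and prd :: "'a \<Rightarrow> 'a \<Rightarrow> 'a"
  assumes "evolution_algebra sc prd"
  shows "(semisimple sc prd \<longleftrightarrow> nonzero_trivial_evolution_algebra sc prd) \<and>
         (Rad sc prd = UNIV \<or> quotient_nonzero_trivial_evolution_algebra sc prd (Rad sc prd))"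
proof -
  from assms obtain B where ap: "algebra_product sc prd" and nb: "natural_basis sc prd B"
    unfolding evolution_algebra_def by blast
  have evoI: "evo sc prd B'" if "natural_basis sc prd B'" for B'
  proof -
    have vs: "vector_space sc" and l1: "\<And>x. Vector_Spaces.linear sc sc (prd x)"
      and l2: "\<And>y. Vector_Spaces.linear sc sc (\<lambda>x. prd x y)"
      using ap unfolding algebra_product_def by auto
    have i: "\<not> module.dependent sc B'" and s: "module.span sc B' = UNIV"
      and o: "\<And>e e'. e \<in> B' \<Longrightarrow> e' \<in> B' \<Longrightarrow> e \<noteq> e' \<Longrightarrow> prd e e' = 0"
      using that unfolding natural_basis_def by auto
    show ?thesis unfolding evo_def evo_axioms_def using vs l1 l2 i s o by simp
  qed
  interpret E: evo sc prd B by (rule evoI[OF nb])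
  have i: "semisimple sc prd \<longleftrightarrow> nonzero_trivial_evolution_algebra sc prd"
  proof
    assume "semisimple sc prd"
    then have "\<forall>e\<in>B. \<exists>w. w \<noteq> 0 \<and> prd e e = sc w e"
      using E.semi_triv unfolding semisimple_def by blast
    then show "nonzero_trivial_evolution_algebra sc prd"
      unfolding nonzero_trivial_evolution_algebra_def using ap nb by blast
  next
    assume "nonzero_trivial_evolution_algebra sc prd"
    then obtain B' where nb': "natural_basis sc prd B'" and t: "\<forall>e\<in>B'. \<exists>w. w \<noteq> 0 \<and> prd e e = sc w e"
      unfolding nonzero_trivial_evolution_algebra_def by blast
    interpret E': evo sc prd B' by (rule evoI[OF nb'])
    show "semisimple sc prd" unfolding semisimple_def using E'.triv_semi[OF t] .
  qed
  show ?thesis using i E.quot by (rule conjI)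
qed

theorem corollary3p14:
  fixes scR :: "real \<Rightarrow> 'a::ab_group_add \<Rightarrow> 'a" and multR :: "'a \<Rightarrow> 'a \<Rightarrow> 'a"
    and scC :: "complex \<Rightarrow> 'b::ab_group_add \<Rightarrow> 'b" and multC :: "'b \<Rightarrow> 'b \<Rightarrow> 'b"
  shows "(evolution_algebra scR multR \<and> (\<exists>x::'a. x \<noteq> 0) \<longrightarrow>
            (semisimple scR multR \<longleftrightarrow> nonzero_trivial_evolution_algebra scR multR) \<and>
            (Rad scR multR = UNIV \<or>
             quotient_nonzero_trivial_evolution_algebra scR multR (Rad scR multR)))
       \<and> (evolution_algebra scC multC \<and> (\<exists>x::'b. x \<noteq> 0) \<longrightarrow>
            (semisimple scC multC \<longleftrightarrow> nonzero_trivial_evolution_algebra scC multC) \<and>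
            (Rad scC multC = UNIV \<or>
             quotient_nonzero_trivial_evolution_algebra scC multC (Rad scC multC)))"
proof (rule conjI)
  show "evolution_algebra scR multR \<and> (\<exists>x::'a. x \<noteq> 0) \<longrightarrow>
            (semisimple scR multR \<longleftrightarrow> nonzero_trivial_evolution_algebra scR multR) \<and>
            (Rad scR multR = UNIV \<or>
             quotient_nonzero_trivial_evolution_algebra scR multR (Rad scR multR))"
  proof
    assume "evolution_algebra scR multR \<and> (\<exists>x::'a. x \<noteq> 0)"
    then show "(semisimple scR multR \<longleftrightarrow> nonzero_trivial_evolution_algebra scR multR) \<and>
            (Rad scR multR = UNIV \<or>
             quotient_nonzero_trivial_evolution_algebra scR multR (Rad scR multR))"
      by (intro evo_main) (rule conjunct1)
  qed
  show "evolution_algebra scC multC \<and> (\<exists>x::'b. x \<noteq> 0) \<longrightarrow>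
            (semisimple scC multC \<longleftrightarrow> nonzero_trivial_evolution_algebra scC multC) \<and>
            (Rad scC multC = UNIV \<or>
             quotient_nonzero_trivial_evolution_algebra scC multC (Rad scC multC))"
  proof
    assume "evolution_algebra scC multC \<and> (\<exists>x::'b. x \<noteq> 0)"
    then show "(semisimple scC multC \<longleftrightarrow> nonzero_trivial_evolution_algebra scC multC) \<and>
            (Rad scC multC = UNIV \<or>
             quotient_nonzero_trivial_evolution_algebra scC multC (Rad scC multC))"
      by (intro evo_main) (rule conjunct1)
  qed
qed

end
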